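(* The price of equitability is $\Omega(n^2)$ with respect to the \textsc{Min-Sum} objective and $\Omega(n)$ with respect to the \textsc{Min-Max} objective, where $n$ is the number of agents.
   Context: An instance $\mathcal{I}$ has agents $N=[n]$, projects $P$, timesteps $T=[\ell]$, and disapproval sets $D_{ik}\subseteq P$. An outcome is $\mathbf{o}\in P^\ell$ and $d_i(\mathbf{o})=|\{k\in T:o_k\in D_{ik}\}|$. An outcome is equitable if $d_i(\mathbf{o})=d_j(\mathbf{o})$ for all $i,j\in N$. For $W\in\{\textsc{Min-Sum},\textsc{Min-Max}\}$, the $W$-value of $\mathbf{o}$ is $\sum_i d_i(\mathbf{o})$ or $\max_i d_i(\mathbf{o})$ respectively. The price of equitability with respect to $W$ is the supremum, over instances admitting at least one equitable outcome, of the ratio between the minimum $W$-value over equitable outcomes and the minimum $W$-value over all outcomes, considered as a function of $n$. *)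

theory Defs
  imports Complex_Main
begin

text \<open>Instances: agents are 0..<n, projects form a finite nonempty set P of naturals,
  timesteps are 0..<l, and D i k is the disapproval set of agent i at timestep k.\<close>

definition is_outcome :: "nat set \<Rightarrow> nat \<Rightarrow> (nat \<Rightarrow> nat) \<Rightarrow> bool" where
  "is_outcome P l oc \<longleftrightarrow> (\<forall>k<l. oc k \<in> P)"

definition disutil :: "(nat \<Rightarrow> nat \<Rightarrow> nat set) \<Rightarrow> nat \<Rightarrow> (nat \<Rightarrow> nat) \<Rightarrow> nat \<Rightarrow> nat" where
  "disutil D l oc i = card {k \<in> {0..<l}. oc k \<in> D i k}"

definition equitable :: "nat \<Rightarrow> (nat \<Rightarrow> nat \<Rightarrow> nat set) \<Rightarrow> nat \<Rightarrow> (nat \<Rightarrow> nat) \<Rightarrow> bool" where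
  "equitable n D l oc \<longleftrightarrow> (\<forall>i<n. \<forall>j<n. disutil D l oc i = disutil D l oc j)"

definition minsum_value :: "nat \<Rightarrow> (nat \<Rightarrow> nat \<Rightarrow> nat set) \<Rightarrow> nat \<Rightarrow> (nat \<Rightarrow> nat) \<Rightarrow> nat" where
  "minsum_value n D l oc = (\<Sum>i<n. disutil D l oc i)"

definition minmax_value :: "nat \<Rightarrow> (nat \<Rightarrow> nat \<Rightarrow> nat set) \<Rightarrow> nat \<Rightarrow> (nat \<Rightarrow> nat) \<Rightarrow> nat" where
  "minmax_value n D l oc = Max (insert 0 (disutil D l oc ` {..<n}))"

definition opt_value ::
  "(nat \<Rightarrow> (nat \<Rightarrow> nat \<Rightarrow> nat set) \<Rightarrow> nat \<Rightarrow> (nat \<Rightarrow> nat) \<Rightarrow> nat)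
   \<Rightarrow> nat \<Rightarrow> nat set \<Rightarrow> (nat \<Rightarrow> nat \<Rightarrow> nat set) \<Rightarrow> nat \<Rightarrow> nat" where
  "opt_value W n P D l = Min {W n D l oc | oc. is_outcome P l oc}"

definition opt_equitable_value ::
  "(nat \<Rightarrow> (nat \<Rightarrow> nat \<Rightarrow> nat set) \<Rightarrow> nat \<Rightarrow> (nat \<Rightarrow> nat) \<Rightarrow> nat)
   \<Rightarrow> nat \<Rightarrow> nat set \<Rightarrow> (nat \<Rightarrow> nat \<Rightarrow> nat set) \<Rightarrow> nat \<Rightarrow> nat" where
  "opt_equitable_value W n P D l = Min {W n D l oc | oc. is_outcome P l oc \<and> equitable n D l oc}"

end

theory Submission
  imports Defs
begin

definition DD :: "nat \<Rightarrow> nat \<Rightarrow> nat set" where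
  "DD i k = (if k = 0 then (if i = 0 then UNIV else {})
             else if i = k then {} else if i = 0 then {2} else {1,2})"

lemma disutil_le: "disutil D l oc i \<le> l"
  unfolding disutil_def
proof -
  have "card {k \<in> {0..<l}. oc k \<in> D i k} \<le> card {0..<l}" by (rule card_mono) auto
  then show "card {k \<in> {0..<l}. oc k \<in> D i k} \<le> l" by simp
qed

lemma disutil0: "1 \<le> n \<Longrightarrow> 1 \<le> disutil DD n oc 0"
proof -
  assume "1 \<le> n"
  then have "0 \<in> {k \<in> {0..<n}. oc k \<in> DD 0 k}" by (auto simp: DD_def)
  then show ?thesis unfolding disutil_def
  proof -
    have "finite {k \<in> {0..<n}. oc k \<in> DD 0 k}" by simp
    then have "card {k \<in> {0..<n}. oc k \<in> DD 0 k} > 0" using \<open>0 \<in> _\<close> card_gt_0_iff by blast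
    then show "1 \<le> card {k \<in> {0..<n}. oc k \<in> DD 0 k}" by simp
  qed
qed

lemma disutil_i:
  assumes "is_outcome {0,1,2} n oc" "1 \<le> i" "i < n"
  shows "disutil DD n oc i = card ({k\<in>{1..<n}. oc k \<noteq> 0} - {i})"
proof -
  have "{k \<in> {0..<n}. oc k \<in> DD i k} = {k\<in>{1..<n}. oc k \<noteq> 0} - {i}"
    using assms unfolding is_outcome_def DD_def by auto
  then show ?thesis unfolding disutil_def by simp
qed

lemma equit_val:
  assumes n: "n \<ge> 2" and oc: "is_outcome {0,1,2} n oc" and eq: "equitable n DD n oc" and i: "i < n"
  shows "disutil DD n oc i = n - 2"
proof -
  define N0 where "N0 = {k\<in>{1..<n}. oc k \<noteq> 0}"
  have fin: "finite N0" unfolding N0_def by simp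
  have du: "\<And>j. 1 \<le> j \<Longrightarrow> j < n \<Longrightarrow> disutil DD n oc j = card N0 - (if j \<in> N0 then 1 else 0)"
    using disutil_i[OF oc] fin unfolding N0_def[symmetric]
    by (simp add: card_Diff_singleton)
  have all: "N0 = {1..<n}"
  proof (rule ccontr)
    assume "N0 \<noteq> {1..<n}"
    moreover have "N0 \<subseteq> {1..<n}" unfolding N0_def by auto
    ultimately have "\<exists>i0\<in>{1..<n}. i0 \<notin> N0" by blast
    then obtain i0 where i0: "i0 \<in> {1..<n}" "i0 \<notin> N0" by blast
    have "\<And>j. j \<in> {1..<n} \<Longrightarrow> j \<notin> N0"
    proof -
      fix j assume j: "j \<in> {1..<n}"
      have dj: "disutil DD n oc j = disutil DD n oc i0" using eq j i0 unfolding equitable_def by auto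
      show "j \<notin> N0"
      proof
        assume jn: "j \<in> N0"
        then have "card N0 > 0" using fin card_gt_0_iff by blast
        then show False using du[of j] du[of i0] j i0 jn \<open>disutil DD n oc j = disutil DD n oc i0\<close> by simp
      qed
    qed
    then have "N0 = {}" unfolding N0_def by auto
    then have "disutil DD n oc i0 = 0" using du[of i0] i0 by auto
    moreover have "disutil DD n oc 0 = disutil DD n oc i0" using eq i0 unfolding equitable_def by auto
    ultimately show False using disutil0[of n oc] n by auto
  qed
  have d1: "disutil DD n oc 1 = n - 2" using du[of 1] n all by auto
  show ?thesis
  proof (cases "i = 0")
    case True
    have "disutil DD n oc 0 = disutil DD n oc 1" using eq n unfolding equitable_def by simp
    then show ?thesis using True d1 by simp
  next
    case False
    then show ?thesis using du[of i] i all by auto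
  qed
qed

definition oc0 :: "nat \<Rightarrow> nat" where "oc0 k = (if k = 1 \<or> k = 2 then 1 else 2)"

lemma oc0_out: "is_outcome {0,1,2} n oc0" unfolding is_outcome_def oc0_def by auto

lemma oc0_eq: assumes n: "n \<ge> 3" shows "equitable n DD n oc0"
proof -
  have N: "{k\<in>{1..<n}. oc0 k \<noteq> 0} = {1..<n}" unfolding oc0_def by auto
  have di: "\<And>i. 1 \<le> i \<Longrightarrow> i < n \<Longrightarrow> disutil DD n oc0 i = n - 2"
    using disutil_i[OF oc0_out] N by simp
  have "{k \<in> {0..<n}. oc0 k \<in> DD 0 k} = insert 0 {3..<n}"
    using n unfolding oc0_def DD_def by auto
  then have d0: "disutil DD n oc0 0 = n - 2" unfolding disutil_def using n by (simp add: card_insert_if)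
  have "\<And>i. i < n \<Longrightarrow> disutil DD n oc0 i = n - 2"
    using d0 di by (case_tac "i = 0") auto
  then show ?thesis unfolding equitable_def by simp
qed

lemma eq_sum: assumes "n \<ge> 2" "is_outcome {0,1,2} n oc" "equitable n DD n oc"
  shows "minsum_value n DD n oc = n * (n - 2)"
  unfolding minsum_value_def using equit_val[OF assms] by simp

lemma eq_max: assumes "n \<ge> 2" "is_outcome {0,1,2} n oc" "equitable n DD n oc"
  shows "minmax_value n DD n oc = n - 2"
proof -
  have "disutil DD n oc ` {..<n} = (\<lambda>_. n - 2) ` {..<n}"
    by (rule image_cong) (simp_all add: equit_val[OF assms])
  also have "\<dots> = {n - 2}" using assms(1) by (intro image_constant[of 0]) simp
  finally have "disutil DD n oc ` {..<n} = {n - 2}" .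
  then show ?thesis unfolding minmax_value_def by simp
qed

lemma z_d: assumes "i < n" shows "disutil DD n (\<lambda>k. 0) i = (if i = 0 then 1 else 0)"
proof -
  have "{k \<in> {0..<n}. (0::nat) \<in> DD i k} = (if i = 0 then {0} else {})"
    using assms unfolding DD_def by auto
  then show ?thesis unfolding disutil_def by simp
qed

lemma z_out: "is_outcome {0,1,2} n (\<lambda>k. 0)" unfolding is_outcome_def by auto

lemma z_sum: assumes "n \<ge> 1" shows "minsum_value n DD n (\<lambda>k. 0) = 1"
proof -
  have "(\<Sum>i<n. disutil DD n (\<lambda>k. 0) i) = (\<Sum>i<n. (if i = 0 then 1 else 0))"
    using z_d by (intro sum.cong) auto
  also have "\<dots> = 1" using assms by (simp add: sum.delta)
  finally show ?thesis unfolding minsum_value_def .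
qed

lemma z_max: assumes "n \<ge> 1" shows "minmax_value n DD n (\<lambda>k. 0) = 1"
proof -
  have "disutil DD n (\<lambda>k. 0) ` {..<n} \<subseteq> {0,1}" using z_d by auto
  moreover have "1 \<in> disutil DD n (\<lambda>k. 0) ` {..<n}" using z_d[of 0 n] assms
    by (intro image_eqI[of _ _ 0]) auto
  ultimately have "insert 0 (disutil DD n (\<lambda>k. 0) ` {..<n}) = {0,1}" by auto
  then show ?thesis unfolding minmax_value_def by simp
qed

lemma sum_ge: "n \<ge> 1 \<Longrightarrow> 1 \<le> minsum_value n DD n oc"
proof -
  assume n: "n \<ge> 1"
  have "disutil DD n oc 0 \<le> (\<Sum>i<n. disutil DD n oc i)"
    using n by (intro member_le_sum) auto
  then show ?thesis using disutil0[OF n, of oc] unfolding minsum_value_def by simp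
qed

lemma sum_le: "minsum_value n DD n oc \<le> n * n"
proof -
  have "(\<Sum>i<n. disutil DD n oc i) \<le> (\<Sum>i<n. n)" by (intro sum_mono disutil_le)
  then show ?thesis unfolding minsum_value_def by simp
qed

lemma max_ge: "n \<ge> 1 \<Longrightarrow> 1 \<le> minmax_value n DD n oc"
proof -
  assume n: "n \<ge> 1"
  have "disutil DD n oc 0 \<le> Max (insert 0 (disutil DD n oc ` {..<n}))"
    using n by (intro Max_ge) auto
  then show ?thesis using disutil0[OF n, of oc] unfolding minmax_value_def by simp
qed

lemma max_le: "minmax_value n DD n oc \<le> n"
  unfolding minmax_value_def using disutil_le by (subst Max_le_iff) auto

lemma optv:
  assumes n: "n \<ge> 1" and ge: "\<And>oc. 1 \<le> W n DD n oc" and le: "\<And>oc. W n DD n oc \<le> B"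
    and z: "W n DD n (\<lambda>k. 0) = 1"
  shows "opt_value W n {0,1,2} DD n = 1"
  unfolding opt_value_def
proof (rule Min_eqI)
  show "finite {W n DD n oc |oc. is_outcome {0, 1, 2} n oc}"
    by (rule finite_subset[of _ "{..B}"]) (auto simp: le)
  show "\<And>y. y \<in> {W n DD n oc |oc. is_outcome {0, 1, 2} n oc} \<Longrightarrow> 1 \<le> y" using ge by auto
  show "1 \<in> {W n DD n oc |oc. is_outcome {0, 1, 2} n oc}" 
  proof -
    have "W n DD n (\<lambda>k. 0) \<in> {W n DD n oc |oc. is_outcome {0, 1, 2} n oc}" using z_out by blast
    then show ?thesis using z by simp
  qed
qed

lemma opteqv:
  assumes n: "n \<ge> 3" and v: "\<And>oc. is_outcome {0,1,2} n oc \<Longrightarrow> equitable n DD n oc \<Longrightarrow> W n DD n oc = V"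
  shows "opt_equitable_value W n {0,1,2} DD n = V"
proof -
  have "{W n DD n oc |oc. is_outcome {0, 1, 2} n oc \<and> equitable n DD n oc} = {V}"
    using v oc0_out oc0_eq[OF n] by blast
  then show ?thesis unfolding opt_equitable_value_def by simp
qed

lemma arith1: "(n::nat) \<ge> 3 \<Longrightarrow> n * n \<le> 3 * (n * (n - 2))"
proof -
  assume "n \<ge> 3"
  then have "n \<le> 3 * (n - 2)" by simp
  then have "n * n \<le> n * (3 * (n - 2))" by (rule mult_le_mono2)
  then show ?thesis by (simp add: algebra_simps)
qed

theorem theorem13:
  shows "(\<exists>c::real. c > 0 \<and> (\<exists>N. \<forall>n\<ge>N. \<exists>P D l.
            finite P \<and> P \<noteq> {} \<and>
            (\<exists>oc. is_outcome P l oc \<and> equitable n D l oc) \<and>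
            opt_value minsum_value n P D l > 0 \<and>
            real (opt_equitable_value minsum_value n P D l)
              \<ge> c * (real n)^2 * real (opt_value minsum_value n P D l)))
       \<and> (\<exists>c::real. c > 0 \<and> (\<exists>N. \<forall>n\<ge>N. \<exists>P D l.
            finite P \<and> P \<noteq> {} \<and>
            (\<exists>oc. is_outcome P l oc \<and> equitable n D l oc) \<and>
            opt_value minmax_value n P D l > 0 \<and>
            real (opt_equitable_value minmax_value n P D l)
              \<ge> c * real n * real (opt_value minmax_value n P D l)))"
proof (intro conjI)
  show "\<exists>c::real. c > 0 \<and> (\<exists>N. \<forall>n\<ge>N. \<exists>P D l.
            finite P \<and> P \<noteq> {} \<and>
            (\<exists>oc. is_outcome P l oc \<and> equitable n D l oc) \<and>
            opt_value minsum_value n P D l > 0 \<and>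
            real (opt_equitable_value minsum_value n P D l)
              \<ge> c * (real n)^2 * real (opt_value minsum_value n P D l))"
  proof (intro exI[of _ "1/3"] conjI exI[of _ 3] allI impI)
    fix n :: nat assume n: "3 \<le> n"
    have o: "opt_value minsum_value n {0,1,2} DD n = 1"
      using n by (intro optv[where B = "n*n"] sum_ge sum_le z_sum) auto
    have e: "opt_equitable_value minsum_value n {0,1,2} DD n = n * (n - 2)"
      using n by (intro opteqv eq_sum) auto
    have a: "real (n * n) \<le> real (3 * (n * (n - 2)))" using arith1[OF n] by linarith
    have "1/3 * (real n)^2 * 1 \<le> real (n * (n - 2))"
      using a unfolding of_nat_mult power2_eq_square by simp
    then show "\<exists>P D l. finite P \<and> P \<noteq> {} \<and>
            (\<exists>oc. is_outcome P l oc \<and> equitable n D l oc) \<and>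
            opt_value minsum_value n P D l > 0 \<and>
            real (opt_equitable_value minsum_value n P D l)
              \<ge> 1/3 * (real n)^2 * real (opt_value minsum_value n P D l)"
      using o e oc0_out oc0_eq[OF n] by (intro exI[of _ "{0,1,2}"] exI[of _ DD] exI[of _ n]) auto
  qed simp
next
  show "\<exists>c::real. c > 0 \<and> (\<exists>N. \<forall>n\<ge>N. \<exists>P D l.
            finite P \<and> P \<noteq> {} \<and>
            (\<exists>oc. is_outcome P l oc \<and> equitable n D l oc) \<and>
            opt_value minmax_value n P D l > 0 \<and>
            real (opt_equitable_value minmax_value n P D l)
              \<ge> c * real n * real (opt_value minmax_value n P D l))"
  proof (intro exI[of _ "1/3"] conjI exI[of _ 3] allI impI)
    fix n :: nat assume n: "3 \<le> n"
    have o: "opt_value minmax_value n {0,1,2} DD n = 1"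
      using n by (intro optv[where B = "n"] max_ge max_le z_max) auto
    have e: "opt_equitable_value minmax_value n {0,1,2} DD n = n - 2"
      using n by (intro opteqv eq_max) auto
    have a: "real n \<le> 3 * real (n - 2)" using n by linarith
    have "1/3 * real n * 1 \<le> real (n - 2)" using a by simp
    then show "\<exists>P D l. finite P \<and> P \<noteq> {} \<and>
            (\<exists>oc. is_outcome P l oc \<and> equitable n D l oc) \<and>
            opt_value minmax_value n P D l > 0 \<and>
            real (opt_equitable_value minmax_value n P D l)
              \<ge> 1/3 * real n * real (opt_value minmax_value n P D l)"
      using o e oc0_out oc0_eq[OF n] by (intro exI[of _ "{0,1,2}"] exI[of _ DD] exI[of _ n]) auto
  qed simp
qed

end
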